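(* Let $\mu,\nu,\rho$ be nonnegative integers with $2\rho\le\nu-1$. For integers $m,n$ put $m'=m+q^{\mu-\rho}$ and $n'=n+q^\rho$. Then $$\#\big\{(m,n)\in\mathbb{Z}^2:\ q^{\mu-1}\le m<q^\mu,\ q^{\nu-1}\le n<q^\nu,\ T_q(mn)\ne T_q(m'n')\big\}\ll\log(q^{\mu+\nu})\,q^{\mu+\nu-\rho}.$$
   Context: $q\ge2$ is a fixed integer; for real $x>0$, $T_q(x)=\lfloor\log x/\log q\rfloor$. The implied constant depends at most on $q$. *)

theory Defs
  imports Complex_Main
begin

definition Tq :: "nat \<Rightarrow> real \<Rightarrow> int" where
  "Tq q x = \<lfloor>ln x / ln (real q)\<rfloor>"

end

theory Submission
  imports Defs
begin

lemma int_interval_card: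
  fixes a b :: real
  assumes "a \<le> b"
  shows "finite {n::int. a \<le> real_of_int n \<and> real_of_int n < b}"
    and "real (card {n::int. a \<le> real_of_int n \<and> real_of_int n < b}) \<le> b - a + 1"
proof -
  have eq: "{n::int. a \<le> real_of_int n \<and> real_of_int n < b} = {\<lceil>a\<rceil>..<\<lceil>b\<rceil>}"
    by (auto simp: ceiling_le_iff less_ceiling_iff)
  show "finite {n::int. a \<le> real_of_int n \<and> real_of_int n < b}" unfolding eq by simp
  have "\<lceil>a\<rceil> \<le> \<lceil>b\<rceil>" using assms by (simp add: ceiling_mono)
  moreover have "real_of_int \<lceil>b\<rceil> < b + 1" by linarith
  moreover have "a \<le> real_of_int \<lceil>a\<rceil>" by linarith
  ultimately show "real (card {n::int. a \<le> real_of_int n \<and> real_of_int n < b}) \<le> b - a + 1"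
    unfolding eq by (simp del: of_int_diff) linarith
qed

lemma Tq_cross:
  fixes x y :: real
  assumes q: "q \<ge> 2" and x: "x > 0" and y: "y > 0" and ne: "Tq q x \<noteq> Tq q y" and xy: "x \<le> y"
  shows "x < real q powr real_of_int (Tq q y) \<and> real q powr real_of_int (Tq q y) \<le> y"
proof -
  have Q: "real q > 1" using q by simp
  have T: "Tq q z = \<lfloor>log (real q) z\<rfloor>" for z unfolding Tq_def log_def by simp
  have "log (real q) x \<le> log (real q) y" using x xy Q by simp
  hence le: "Tq q x \<le> Tq q y" unfolding T by (rule floor_mono)
  hence lt: "Tq q x < Tq q y" using ne by simp
  have "log (real q) x < real_of_int (Tq q x) + 1" unfolding T by linarith
  also have "\<dots> \<le> real_of_int (Tq q y)" using lt by linarith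
  finally have "log (real q) x < real_of_int (Tq q y)" .
  hence 1: "x < real q powr real_of_int (Tq q y)" using x Q
    by (simp add: log_less_iff)
  have "real_of_int (Tq q y) \<le> log (real q) y" unfolding T by linarith
  hence 2: "real q powr real_of_int (Tq q y) \<le> y" using y Q
    by (simp add: le_log_iff)
  show ?thesis using 1 2 by simp
qed

lemma main_bound:
  fixes q \<mu> \<nu> \<rho> :: nat
  assumes q: "q \<ge> 2" and h: "2 * int \<rho> \<le> int \<nu> - 1"
  shows "real (card {(m :: int, n :: int).
        real q powi (int \<mu> - 1) \<le> real_of_int m \<and> real_of_int m < real q ^ \<mu> \<and>
        real q powi (int \<nu> - 1) \<le> real_of_int n \<and> real_of_int n < real q ^ \<nu> \<and>
        Tq q (real_of_int m * real_of_int n) \<noteq>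
          Tq q ((real_of_int m + real q powi (int \<mu> - int \<rho>)) * (real_of_int n + real q ^ \<rho>))})
     \<le> (3 * (real q ^ 3 + 2) / ln 2) * ln (real q ^ (\<mu> + \<nu>)) * real q powi (int \<mu> + int \<nu> - int \<rho>)"
    (is "real (card ?S) \<le> ?C * ?L * ?P")
proof -
  define K where "K = 3 * (real q ^ 3 + 2)"
  have Q2: "real q \<ge> 2" using q by simp
  have Q0: "real q > 0" using Q2 by simp
  have \<nu>1: "\<nu> \<ge> 1" and \<rho>\<nu>: "2 * \<rho> \<le> \<nu>" using h by linarith+
  have Cpos: "?C > 0" using Q0 by (intro divide_pos_pos) (auto simp: add_pos_nonneg)
  have Lpos: "?L \<ge> 0" using Q2 by (simp add: ln_realpow)
  have Ppos: "?P > 0" using Q0 by simp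
  show ?thesis
  proof (cases "\<mu> = 0")
    case True
    have "?S = {}"
    proof (rule ccontr)
      assume "?S \<noteq> {}"
      then obtain m n where mn: "(m,n) \<in> ?S" by auto
      have p: "real q powi (int \<mu> - 1) > 0" using Q0 by simp
      have "real q powi (int \<mu> - 1) \<le> real_of_int m" "real_of_int m < real q ^ \<mu>"
        using mn by auto
      hence a: "0 < real_of_int m" "real_of_int m < 1" using p True by (linarith, simp)
      hence "0 < m" "m < 1" by simp_all
      thus False by linarith
    qed
    hence "real (card ?S) = 0" by (simp only: card.empty of_nat_0)
    also have "0 \<le> ?C * ?L * ?P" using Cpos Lpos Ppos by simp
    finally show ?thesis .
  next
    case False
    then obtain \<mu>0 where \<mu>: "\<mu> = Suc \<mu>0" using not0_implies_Suc by blast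
    define N where "N = \<mu> + \<nu>"
    define d where "d = real q powi (int \<mu> - int \<rho>)"
    define E where "E = real q ^ \<nu> / real q ^ \<rho>"
    have d_eq: "d = real q ^ \<mu> / real q ^ \<rho>" unfolding d_def using Q0 by (simp add: power_int_diff)
    have Qr1: "1 \<le> real q ^ \<rho>" using Q2 by simp
    have dpos: "d > 0" unfolding d_eq using Q0 by simp
    have dle: "d \<le> real q ^ \<mu>" unfolding d_eq using Qr1 Q0 by (simp add: divide_le_eq)
    have rnu: "real q ^ \<rho> \<le> real q ^ \<nu>" using Q2 \<rho>\<nu> by (intro power_increasing) auto
    define M where "M = {int (q ^ \<mu>0)..<int (q ^ \<mu>)}"
    define I where "I = (\<lambda>(m::int) (j::nat). {n::int. real q ^ (N - 1 + j) / (real_of_int m + d) - real q ^ \<rho> \<le> real_of_int n \<and>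
                     real_of_int n < real q ^ (N - 1 + j) / real_of_int m})"
    define F where "F = (\<lambda>m. \<Union>j<3. I m j)"
    have sub: "?S \<subseteq> Sigma M F"
    proof (rule subrelI)
      fix m n assume mn: "(m,n) \<in> ?S"
      have pw1: "real q powi (int \<mu> - 1) = real q ^ \<mu>0" using \<mu> by simp
      have pw2: "real q powi (int \<nu> - 1) = real q ^ (\<nu> - 1)"
      proof -
        have e: "int \<nu> - 1 = int (\<nu> - 1)" using \<nu>1 by simp
        show ?thesis by (metis e power_int_of_nat)
      qed
      have all: "real q powi (int \<mu> - 1) \<le> real_of_int m \<and> real_of_int m < real q ^ \<mu> \<and>
        real q powi (int \<nu> - 1) \<le> real_of_int n \<and> real_of_int n < real q ^ \<nu> \<and>
        Tq q (real_of_int m * real_of_int n) \<noteq>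
          Tq q ((real_of_int m + real q powi (int \<mu> - int \<rho>)) * (real_of_int n + real q ^ \<rho>))"
        using mn unfolding mem_Collect_eq prod.case .
      then obtain c1 c2 c3 c4 c5 where c: "real q powi (int \<mu> - 1) \<le> real_of_int m" "real_of_int m < real q ^ \<mu>"
        "real q powi (int \<nu> - 1) \<le> real_of_int n" "real_of_int n < real q ^ \<nu>"
        "Tq q (real_of_int m * real_of_int n) \<noteq>
          Tq q ((real_of_int m + real q powi (int \<mu> - int \<rho>)) * (real_of_int n + real q ^ \<rho>))"
        by blast
      have m1: "real q ^ \<mu>0 \<le> real_of_int m" using c(1) unfolding pw1 .
      have m2: "real_of_int m < real q ^ \<mu>" by (rule c(2))
      have n1: "real q ^ (\<nu> - 1) \<le> real_of_int n" using c(3) unfolding pw2 .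
      have n2: "real_of_int n < real q ^ \<nu>" by (rule c(4))
      have ne: "Tq q (real_of_int m * real_of_int n) \<noteq> Tq q ((real_of_int m + d) * (real_of_int n + real q ^ \<rho>))"
        using c(5) unfolding d_def .
      have "real_of_int (int (q ^ \<mu>0)) \<le> real_of_int m" using m1 by simp
      hence "int (q ^ \<mu>0) \<le> m" by (simp only: of_int_le_iff)
      moreover have "real_of_int m < real_of_int (int (q ^ \<mu>))" using m2 by simp
      hence "m < int (q ^ \<mu>)" by (simp only: of_int_less_iff)
      ultimately have mM: "m \<in> M" unfolding M_def by simp
      have mpos: "real_of_int m \<ge> 1" using m1 Q2 one_le_power[of "real q" \<mu>0] by linarith
      have npos: "real_of_int n \<ge> 1" using n1 Q2 one_le_power[of "real q" "\<nu> - 1"] by linarith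
      define x where "x = real_of_int m * real_of_int n"
      define y where "y = (real_of_int m + d) * (real_of_int n + real q ^ \<rho>)"
      have xpos: "x > 0" unfolding x_def using mpos npos by simp
      have xy: "x \<le> y" unfolding x_def y_def using mpos npos dpos Qr1
        by (intro mult_mono) auto
      have ypos: "y > 0" using xpos xy by simp
      define k where "k = Tq q y"
      have cr: "x < real q powr real_of_int k" "real q powr real_of_int k \<le> y"
        using Tq_cross[OF q xpos ypos _ xy] ne unfolding k_def x_def y_def by auto
      have "real q ^ (N - 2) = real q ^ \<mu>0 * real q ^ (\<nu> - 1)"
        unfolding N_def \<mu> using \<nu>1 by (simp flip: power_add)
      also have "\<dots> \<le> x" unfolding x_def using m1 n1 Q0 mpos by (intro mult_mono) auto
      finally have lo: "real q ^ (N - 2) \<le> x" .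
      have "real q powr real (N - 2) < real q powr real_of_int k"
        using lo cr(1) powr_realpow[OF Q0, of "N - 2"] by linarith
      hence klo: "real (N - 2) < real_of_int k" using Q2 by simp
      have "y < (2 * real q ^ \<mu>) * (2 * real q ^ \<nu>)" unfolding y_def
        using m2 dle n2 rnu mpos npos Qr1 Q0 dpos by (intro mult_strict_mono) auto
      also have "\<dots> = 4 * real q ^ N" unfolding N_def by (simp add: power_add)
      also have "\<dots> \<le> real q ^ 2 * real q ^ N"
      proof -
        have "4 \<le> real q ^ 2" using Q2 power_mono[OF Q2, of 2] by simp
        thus ?thesis using Q0 by (intro mult_right_mono) auto
      qed
      also have "\<dots> = real q ^ (N + 2)" by (simp only: power_add mult.commute)
      finally have hi: "y < real q ^ (N + 2)" .
      have "real q powr real_of_int k < real q powr real (N + 2)"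
        using hi cr(2) powr_realpow[OF Q0, of "N + 2"] by linarith
      hence khi: "real_of_int k < real (N + 2)" using Q2 by simp
      have N2: "N \<ge> 2" unfolding N_def using \<mu> \<nu>1 by simp
      define j where "j = nat (k - int (N - 1))"
      have j3: "j < 3" and kj: "k = int (N - 1 + j)" unfolding j_def using klo khi N2 by linarith+
      have Pk: "real q powr real_of_int k = real q ^ (N - 1 + j)" unfolding kj of_int_of_nat_eq
        by (rule powr_realpow[OF Q0])
      have mr: "real_of_int m > 0" using mpos by simp
      have "real_of_int n < real q ^ (N - 1 + j) / real_of_int m"
        using cr(1) mr unfolding Pk x_def by (simp add: pos_less_divide_eq mult.commute)
      moreover have "real q ^ (N - 1 + j) / (real_of_int m + d) \<le> real_of_int n + real q ^ \<rho>"
        using cr(2) mr dpos unfolding Pk y_def by (simp add: pos_divide_le_eq mult.commute)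
      ultimately have "n \<in> I m j" unfolding I_def by simp
      hence "n \<in> F m" unfolding F_def using j3 by blast
      thus "(m, n) \<in> Sigma M F" using mM by simp
    qed
    have fib: "finite (I m j) \<and> real (card (I m j)) \<le> (real q ^ 3 + 2) * E"
      if mM: "m \<in> M" and j3: "j < 3" for m j
    proof -
      define P where "P = real q ^ (N - 1 + j)"
      have m1: "real q ^ \<mu>0 \<le> real_of_int m"
      proof -
        have "int (q ^ \<mu>0) \<le> m" using mM unfolding M_def by simp
        hence "real_of_int (int (q ^ \<mu>0)) \<le> real_of_int m" by (simp only: of_int_le_iff)
        thus ?thesis by simp
      qed
      have mpos: "real_of_int m \<ge> 1" using m1 Q2 one_le_power[of "real q" \<mu>0] by linarith
      have Q\<mu>0: "real q ^ \<mu>0 > 0" using Q0 by simp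
      have Ppos: "P > 0" unfolding P_def using Q0 by simp
      have ab: "P / (real_of_int m + d) - real q ^ \<rho> \<le> P / real_of_int m"
      proof -
        have "P / (real_of_int m + d) \<le> P / real_of_int m"
          using Ppos mpos dpos by (intro divide_left_mono) auto
        thus ?thesis using Qr1 by linarith
      qed
      note ic = int_interval_card[OF ab]
      have Ieq: "I m j = {n::int. P / (real_of_int m + d) - real q ^ \<rho> \<le> real_of_int n \<and> real_of_int n < P / real_of_int m}"
        unfolding I_def P_def by simp
      have diff: "P / real_of_int m - P / (real_of_int m + d) = P * d / (real_of_int m * (real_of_int m + d))"
        using mpos dpos by (simp add: field_simps)
      have "P * d / (real_of_int m * (real_of_int m + d)) \<le> real q ^ (N + 1) * d / (real q ^ \<mu>0 * real q ^ \<mu>0)"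
      proof (rule frac_le)
        have "P \<le> real q ^ (N + 1)" unfolding P_def using Q2 j3 \<mu> unfolding N_def by (intro power_increasing) auto
        thus "P * d \<le> real q ^ (N + 1) * d" using dpos by simp
        show "0 \<le> real q ^ (N + 1) * d" using Q0 dpos by simp
        show "0 < real q ^ \<mu>0 * real q ^ \<mu>0" using Q\<mu>0 by simp
        show "real q ^ \<mu>0 * real q ^ \<mu>0 \<le> real_of_int m * (real_of_int m + d)"
          using m1 dpos Q\<mu>0 mpos by (intro mult_mono) auto
      qed
      also have "real q ^ (N + 1) * d / (real q ^ \<mu>0 * real q ^ \<mu>0) = real q ^ 3 * E"
      proof -
        have e: "N + 1 + \<mu> = 3 + \<nu> + \<mu>0 + \<mu>0" unfolding N_def \<mu> by simp
        have "real q ^ (N + 1) * real q ^ \<mu> = real q ^ 3 * real q ^ \<nu> * real q ^ \<mu>0 * real q ^ \<mu>0"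
          by (simp only: power_add[symmetric] e)
        thus ?thesis unfolding d_eq E_def using Q0 by (simp add: field_simps)
      qed
      finally have t1: "P / real_of_int m - P / (real_of_int m + d) \<le> real q ^ 3 * E" using diff by simp
      have Ege: "real q ^ \<rho> \<le> E"
      proof -
        have "real q ^ \<rho> * real q ^ \<rho> \<le> real q ^ \<nu>"
        proof -
          have "real q ^ (\<rho> + \<rho>) \<le> real q ^ \<nu>" using Q2 \<rho>\<nu> by (intro power_increasing) auto
          thus ?thesis by (simp only: power_add)
        qed
        thus ?thesis unfolding E_def using Qr1 Q0 by (simp add: le_divide_eq)
      qed
      have E1: "1 \<le> E" unfolding E_def using rnu Qr1 Q0 by (simp add: le_divide_eq)
      show ?thesis using ic t1 Ege E1 unfolding Ieq by (simp add: algebra_simps)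
    qed
    have finM: "finite M" unfolding M_def by simp
    have finF: "finite (F m)" if "m \<in> M" for m
      unfolding F_def using fib[OF that] by auto
    have cF: "real (card (F m)) \<le> K * E" if mM: "m \<in> M" for m
    proof -
      have "card (F m) \<le> (\<Sum>j<3. card (I m j))" unfolding F_def by (rule card_UN_le) simp
      hence "real (card (F m)) \<le> (\<Sum>j<(3::nat). real (card (I m j)))" by (simp flip: of_nat_sum)
      also have "\<dots> \<le> (\<Sum>j<(3::nat). (real q ^ 3 + 2) * E)"
        by (rule sum_mono) (use fib[OF mM] in auto)
      also have "\<dots> = K * E" unfolding K_def by simp
      finally show ?thesis .
    qed
    have "card ?S \<le> card (Sigma M F)"
      by (rule card_mono[OF _ sub]) (use finM finF in auto)
    hence "real (card ?S) \<le> (\<Sum>m\<in>M. real (card (F m)))"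
      using finM finF by (simp flip: of_nat_sum)
    also have "\<dots> \<le> (\<Sum>m\<in>M. K * E)" by (rule sum_mono) (rule cF)
    also have "\<dots> = real (card M) * (K * E)" by simp
    also have "\<dots> \<le> real q ^ \<mu> * (K * E)"
    proof -
      have "card M \<le> q ^ \<mu>" unfolding M_def by (simp add: nat_le_iff)
      hence "real (card M) \<le> real q ^ \<mu>" by (metis of_nat_le_iff of_nat_power)
      moreover have "K * E \<ge> 0" unfolding K_def E_def using Q0 by simp
      ultimately show ?thesis by (rule mult_right_mono)
    qed
    also have "\<dots> \<le> ?C * ?L * ?P"
    proof -
      have Peq: "?P = real q ^ \<mu> * E"
      proof -
        have e: "int \<mu> + int \<nu> - int \<rho> = int (\<mu> + \<nu>) - int \<rho>" by simp
        have "?P = real q powi (int (\<mu> + \<nu>) - int \<rho>)" by (simp only: e)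
        also have "\<dots> = real q powi int (\<mu> + \<nu>) / real q powi int \<rho>"
          by (rule power_int_diff) (use Q0 in simp)
        also have "\<dots> = real q ^ (\<mu> + \<nu>) / real q ^ \<rho>" by (simp only: power_int_of_nat)
        finally show ?thesis unfolding E_def by (simp add: power_add)
      qed
      have "ln 2 \<le> ?L"
      proof -
        have "ln 2 \<le> ln (real q)" using Q2 by simp
        also have "\<dots> \<le> real (\<mu> + \<nu>) * ln (real q)" 
        proof -
          have "0 \<le> ln (real q)" using Q2 by simp
          moreover have "1 \<le> real (\<mu> + \<nu>)" using \<mu> by simp
          ultimately show ?thesis using mult_right_mono[of 1 "real (\<mu> + \<nu>)" "ln (real q)"] by simp
        qed
        finally show ?thesis using Q0 by (simp add: ln_realpow)
      qed
      hence l1: "?C * ln 2 \<le> ?C * ?L" using Cpos by (intro mult_left_mono) auto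
      have "?C * ln 2 = K" unfolding K_def by simp
      hence "K \<le> ?C * ?L" using l1 by simp
      moreover have "real q ^ \<mu> * E \<ge> 0" unfolding E_def using Q0 by simp
      ultimately have "K * (real q ^ \<mu> * E) \<le> ?C * ?L * (real q ^ \<mu> * E)" by (rule mult_right_mono)
      thus ?thesis unfolding Peq by (simp add: algebra_simps)
    qed
    finally show ?thesis .
  qed
qed

theorem mainTheorem8:
  fixes q :: nat
  assumes "q \<ge> 2"
  shows "\<exists>C>0. \<forall>\<mu> \<nu> \<rho> :: nat. 2 * int \<rho> \<le> int \<nu> - 1 \<longrightarrow>
     real (card {(m :: int, n :: int).
        real q powi (int \<mu> - 1) \<le> real_of_int m \<and> real_of_int m < real q ^ \<mu> \<and>
        real q powi (int \<nu> - 1) \<le> real_of_int n \<and> real_of_int n < real q ^ \<nu> \<and>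
        Tq q (real_of_int m * real_of_int n) \<noteq>
          Tq q ((real_of_int m + real q powi (int \<mu> - int \<rho>)) * (real_of_int n + real q ^ \<rho>))})
     \<le> C * ln (real q ^ (\<mu> + \<nu>)) * real q powi (int \<mu> + int \<nu> - int \<rho>)"
proof -
  have C: "3 * (real q ^ 3 + 2) / ln 2 > 0" using assms by (intro divide_pos_pos) (auto simp: add_pos_nonneg)
  show ?thesis
    by (rule exI[of _ "3 * (real q ^ 3 + 2) / ln 2"]) (use C main_bound[OF assms] in blast)
qed

end
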